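(* Let $F:\mathbb{R}^n\to\mathbb{R}^n$ be of class $\mathscr{C}^1$, $G(x)=(x,F(x))$, and let $d\mu(x)=g(x)\,dx$ with $g$ smooth and positive; let $\pi=\mu\circ G^{-1}$ (so $\iint\Theta\,d\pi=\int\Theta(x,F(x))g(x)\,dx$) and $\langle T_\mu,\varphi\rangle=\int\varphi g\,dx$. For $i,j\in\{1,\dots,n\}$ let $S^1_i=\frac{\partial\pi}{\partial x_i}$ and $S^2_j=\frac{\partial\pi}{\partial y_j}$ be the distributional partial derivatives of $\pi$ in $\mathbb{R}^{2n}$ (variables $(x,y)$). Then for $\Phi\in\mathscr{C}^\infty_c(\mathbb{R}^{2n})$ the Kirchhoff divergences with respect to $T_\mu$ and $S^1_i$, resp. $S^2_j$, are $$Kir_{i,1}\Phi=\frac1g\frac{\partial}{\partial x_i}[g\cdot(\Phi\circ G)]-\frac{\partial\Phi}{\partial x_i}\circ G,\qquad Kir_{j,2}\Phi=-\frac{\partial\Phi}{\partial y_j}\circ G,$$ and for $f$ smooth, with $\Phi(x,y)=f(y)-f(x)$, $$\Delta_{i,1}f=\frac{\partial F}{\partial x_i}\cdot(\nabla f\circ F)+[(f\circ F)-f]\frac{\partial}{\partial x_i}(\log g),\qquad \Delta_{j,2}f=-\frac{\partial f}{\partial x_j}\circ F.$$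
   Context: $\frac{\partial\Phi}{\partial x_i}\circ G$ means the partial derivative of $\Phi$ in its $i$-th first-group variable evaluated at $(x,F(x))$; similarly for $y_j$. Distributional derivatives: $\langle\!\langle\partial\pi/\partial x_i,\Theta\rangle\!\rangle=-\iint\partial\Theta/\partial x_i\,d\pi$. A function $\psi$ is the Kirchhoff divergence of $\Phi$ with respect to $T$ and $S$ if $\langle T,\varphi\psi\rangle=\langle\!\langle S,\varphi\Phi\rangle\!\rangle$ for all $\varphi\in\mathscr{C}_c^\infty(\mathbb{R}^n)$, where $(\varphi\Phi)(x,y)=\varphi(x)\Phi(x,y)$; the Laplacian is the Kirchhoff divergence of $f(y)-f(x)$. *)

theory Defs
  imports "HOL-Analysis.Analysis"
begin

fun Ck :: "nat \<Rightarrow> ('a::euclidean_space \<Rightarrow> 'b::real_normed_vector) \<Rightarrow> bool" where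
  "Ck 0 f = continuous_on UNIV f"
| "Ck (Suc k) f = ((\<forall>x. f differentiable (at x)) \<and>
      (\<forall>v\<in>Basis. Ck k (\<lambda>x. frechet_derivative f (at x) v)))"

definition smooth :: "('a::euclidean_space \<Rightarrow> 'b::real_normed_vector) \<Rightarrow> bool" where
  "smooth f \<longleftrightarrow> (\<forall>k. Ck k f)"

definition test_fun :: "('a::euclidean_space \<Rightarrow> real) \<Rightarrow> bool" where
  "test_fun f \<longleftrightarrow> smooth f \<and> compact (closure {x. f x \<noteq> 0})"

definition pd :: "'n::finite \<Rightarrow> (real^'n \<Rightarrow> 'b::real_normed_vector) \<Rightarrow> real^'n \<Rightarrow> 'b" where
  "pd i h x = frechet_derivative h (at x) (axis i 1)"

definition pd_x :: "'n::finite \<Rightarrow> (real^'n \<Rightarrow> real^'n \<Rightarrow> real) \<Rightarrow> real^'n \<Rightarrow> real^'n \<Rightarrow> real" where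
  "pd_x i \<Theta> x y = frechet_derivative (\<lambda>x'. \<Theta> x' y) (at x) (axis i 1)"

definition pd_y :: "'n::finite \<Rightarrow> (real^'n \<Rightarrow> real^'n \<Rightarrow> real) \<Rightarrow> real^'n \<Rightarrow> real^'n \<Rightarrow> real" where
  "pd_y j \<Theta> x y = frechet_derivative (\<lambda>y'. \<Theta> x y') (at y) (axis j 1)"

definition grad :: "(real^'n \<Rightarrow> real) \<Rightarrow> real^'n \<Rightarrow> real^'n" where
  "grad f x = (\<chi> k. pd k f x)"

definition T_mu :: "(real^'n \<Rightarrow> real) \<Rightarrow> (real^'n \<Rightarrow> real) \<Rightarrow> real" where
  "T_mu g \<phi> = integral UNIV (\<lambda>x. \<phi> x * g x)"

text \<open>The push-forward measure pi = mu o G^{-1}, G(x) = (x, F x), as a functional: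
  iint Theta d pi = int Theta(x, F x) g(x) dx.\<close>
definition pi_meas :: "(real^'n \<Rightarrow> real^'n) \<Rightarrow> (real^'n \<Rightarrow> real) \<Rightarrow>
    (real^'n \<Rightarrow> real^'n \<Rightarrow> real) \<Rightarrow> real" where
  "pi_meas F g \<Theta> = integral UNIV (\<lambda>x. \<Theta> x (F x) * g x)"

definition dpi_dx :: "(real^'n \<Rightarrow> real^'n) \<Rightarrow> (real^'n \<Rightarrow> real) \<Rightarrow> 'n::finite \<Rightarrow>
    (real^'n \<Rightarrow> real^'n \<Rightarrow> real) \<Rightarrow> real" where
  "dpi_dx F g i \<Theta> = - pi_meas F g (pd_x i \<Theta>)"

definition dpi_dy :: "(real^'n \<Rightarrow> real^'n) \<Rightarrow> (real^'n \<Rightarrow> real) \<Rightarrow> 'n::finite \<Rightarrow>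
    (real^'n \<Rightarrow> real^'n \<Rightarrow> real) \<Rightarrow> real" where
  "dpi_dy F g j \<Theta> = - pi_meas F g (pd_y j \<Theta>)"

definition kirchhoff_div :: "((real^'n \<Rightarrow> real) \<Rightarrow> real) \<Rightarrow>
    ((real^'n \<Rightarrow> real^'n \<Rightarrow> real) \<Rightarrow> real) \<Rightarrow>
    (real^'n \<Rightarrow> real^'n \<Rightarrow> real) \<Rightarrow> (real^'n \<Rightarrow> real) \<Rightarrow> bool" where
  "kirchhoff_div T S \<Phi> \<psi> \<longleftrightarrow>
     (\<forall>\<phi>. test_fun \<phi> \<longrightarrow> T (\<lambda>x. \<phi> x * \<psi> x) = S (\<lambda>x y. \<phi> x * \<Phi> x y))"

end

theory Submission
  imports Defs
begin


lemma line_deriv: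
  fixes h :: "real^'n \<Rightarrow> real"
  assumes diff: "\<forall>x. h differentiable at x"
  shows "((\<lambda>s. h (x + s *\<^sub>R e)) has_real_derivative frechet_derivative h (at (x + s *\<^sub>R e)) e) (at s)"
proof -
  let ?y = "x + s *\<^sub>R e"
  have hd: "(h has_derivative frechet_derivative h (at ?y)) (at ?y)"
    using diff frechet_derivative_works by blast
  have ld: "((\<lambda>s. x + s *\<^sub>R e) has_derivative (\<lambda>s. s *\<^sub>R e)) (at s)"
    by (auto intro!: derivative_eq_intros)
  have "((\<lambda>s. h (x + s *\<^sub>R e)) has_derivative (\<lambda>u. frechet_derivative h (at ?y) (u *\<^sub>R e))) (at s)"
    using has_derivative_compose[OF ld hd] by simp
  moreover have "(\<lambda>u. frechet_derivative h (at ?y) (u *\<^sub>R e)) = (*) (frechet_derivative h (at ?y) e)"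
    using linear_frechet_derivative[of h "at ?y"] diff
    by (auto simp: linear_cmul fun_eq_iff)
  ultimately show ?thesis unfolding has_field_derivative_def by simp
qed

lemma ibp_zero:
  fixes h :: "real^'n \<Rightarrow> real" and i :: 'n
  assumes diff: "\<forall>x. h differentiable at x"
   and cont: "continuous_on UNIV (pd i h)"
   and K: "compact K" and zero: "\<forall>x. x \<notin> K \<longrightarrow> h x = 0"
  shows "(pd i h has_integral 0) UNIV"
proof -
  define e :: "real^'n" where "e = axis i 1"
  have ne: "norm e = 1" by (simp add: e_def)
  have pde: "pd i h y = frechet_derivative h (at y) e" for y by (simp add: pd_def e_def)
  obtain R where R: "K \<subseteq> cball 0 R"
    using K compact_imp_bounded[of K] unfolding bounded_pos by (auto simp: subset_eq)
  obtain a where a: "cball (0::real^'n) (R+2) \<subseteq> cbox (-a) a"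
    using bounded_subset_cbox_symmetric[of "cball (0::real^'n) (R+2)"] by auto
  have "compact (pd i h ` cball 0 (R+2))"
    by (rule compact_continuous_image) (auto intro: continuous_on_subset[OF cont])
  then have "bounded (pd i h ` cball 0 (R+2))" by (rule compact_imp_bounded)
  then obtain M where M0: "M > 0" and Mb: "\<forall>y\<in>pd i h ` cball 0 (R+2). norm y \<le> M"
    unfolding bounded_pos by blast
  have M: "M > 0" "\<And>y. y \<in> cball 0 (R+2) \<Longrightarrow> \<bar>pd i h y\<bar> \<le> M" using M0 Mb by auto
  have dl: "((\<lambda>s. h (x + s *\<^sub>R e)) has_real_derivative pd i h (x + s *\<^sub>R e)) (at s)" for x s
    using line_deriv[OF diff] pde by simp
  have hcont: "continuous_on UNIV h"
    using diff differentiable_imp_continuous_within continuous_at_imp_continuous_on by blast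
  have Ksub: "K \<subseteq> cbox (-a) a" using R a by force
  have hI: "(h has_integral integral (cbox (-a) a) h) (cbox (-a) a)"
    using integrable_continuous[OF continuous_on_subset[OF hcont]] by blast
  have shift: "((\<lambda>x. h (x + c)) has_integral integral (cbox (-a) a) h) UNIV" for c
  proof -
    have "((\<lambda>x. h (1 *\<^sub>R x + c)) has_integral (1 / (\<bar>1\<bar> ^ DIM(real^'n))) *\<^sub>R integral (cbox (-a) a) h)
       ((\<lambda>x. (1 / 1) *\<^sub>R x + -((1 / 1) *\<^sub>R c)) ` cbox (-a) a)"
      by (rule has_integral_affinity[OF hI]) simp
    then have 1: "((\<lambda>x. h (x + c)) has_integral integral (cbox (-a) a) h) ((\<lambda>x. x - c) ` cbox (-a) a)"
      by simp
    show ?thesis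
    proof (rule has_integral_on_superset[OF 1])
      fix x assume "x \<notin> (\<lambda>x. x - c) ` cbox (-a) a"
      then have "x + c \<notin> cbox (-a) a" by (metis add_diff_cancel image_eqI)
      then show "h (x + c) = 0" using zero Ksub by blast
    qed auto
  qed
  define t :: "nat \<Rightarrow> real" where "t k = inverse (real (Suc k))" for k
  have tpos: "t k > 0" "t k \<le> 1" for k by (auto simp: t_def field_simps)
  define Q where "Q k x = (h (x + t k *\<^sub>R e) - h x) / t k" for k x
  have Qint: "(Q k has_integral 0) UNIV" for k
  proof -
    have "((\<lambda>x. h (x + t k *\<^sub>R e) - h (x + 0)) has_integral 
       (integral (cbox (-a) a) h - integral (cbox (-a) a) h)) UNIV"
      by (rule has_integral_diff[OF shift shift])
    then have "((\<lambda>x. (h (x + t k *\<^sub>R e) - h (x + 0)) / t k) has_integral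
       (integral (cbox (-a) a) h - integral (cbox (-a) a) h) / t k) UNIV" by (rule has_integral_divide)
    then show ?thesis by (simp add: Q_def[abs_def])
  qed
  define G where "G x = (if x \<in> cbox (-a) a then M else 0)" for x
  have Gint: "G integrable_on UNIV"
    unfolding G_def[abs_def] integrable_restrict_UNIV by (rule integrable_const)
  have bound: "norm (Q k x) \<le> G x" for k x
  proof (cases "x \<in> K \<or> x + t k *\<^sub>R e \<in> K")
    case False
    then show ?thesis using zero M by (simp add: Q_def G_def)
  next
    case True
    have nx: "norm x \<le> R + 1"
    proof (cases "x \<in> K")
      case True then show ?thesis using R by auto
    next
      case False
      then have "norm (x + t k *\<^sub>R e) \<le> R" using True R by auto
      moreover have "norm x \<le> norm (x + t k *\<^sub>R e) + norm (t k *\<^sub>R e)"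
        by (metis add_diff_cancel norm_triangle_ineq4)
      ultimately show ?thesis using tpos[of k] ne by simp
    qed
    obtain z where z: "0 < z" "z < t k"
      "h (x + t k *\<^sub>R e) - h (x + 0 *\<^sub>R e) = (t k - 0) * pd i h (x + z *\<^sub>R e)"
      using MVT2[of 0 "t k" "\<lambda>s. h (x + s *\<^sub>R e)" "\<lambda>s. pd i h (x + s *\<^sub>R e)"] dl tpos[of k] by blast
    have "norm (x + z *\<^sub>R e) \<le> norm x + norm (z *\<^sub>R e)" by (rule norm_triangle_ineq)
    then have "norm (x + z *\<^sub>R e) \<le> R + 2" using nx z tpos[of k] ne by simp
    then have "\<bar>pd i h (x + z *\<^sub>R e)\<bar> \<le> M" using M by simp
    moreover have "Q k x = pd i h (x + z *\<^sub>R e)" using z tpos[of k] by (simp add: Q_def)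
    moreover have "x \<in> cbox (-a) a" using a nx by (simp add: subset_iff)
    ultimately show ?thesis by (simp add: G_def)
  qed
  have conv: "(\<lambda>k. Q k x) \<longlonglongrightarrow> pd i h x" for x
  proof -
    have d: "((\<lambda>y. (h (x + y *\<^sub>R e) - h x) / y) \<longlongrightarrow> pd i h x) (at 0)"
      using has_field_derivative_iff[THEN iffD1, OF dl[of x 0]] by simp
    have tl: "filterlim t (at 0) sequentially"
      unfolding filterlim_at
    proof
      show "eventually (\<lambda>k. t k \<in> UNIV \<and> t k \<noteq> 0) sequentially"
        using tpos by (simp add: less_imp_neq[symmetric])
      show "t \<longlonglongrightarrow> 0" unfolding t_def[abs_def] by (rule LIMSEQ_inverse_real_of_nat)
    qed
    show ?thesis using filterlim_compose[OF d tl] by (simp add: Q_def)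
  qed
  have Qi: "\<And>k. Q k integrable_on UNIV" using Qint by blast
  have "pd i h integrable_on UNIV" "(\<lambda>k. integral UNIV (Q k)) \<longlonglongrightarrow> integral UNIV (pd i h)"
    using dominated_convergence[of Q UNIV G "pd i h"] Qi Gint bound conv by auto
  moreover have "(\<lambda>k. integral UNIV (Q k)) = (\<lambda>k. 0)" using Qint integral_unique by blast
  ultimately have "integral UNIV (pd i h) = 0" using LIMSEQ_unique tendsto_const by metis
  with \<open>pd i h integrable_on UNIV\<close> show ?thesis by (metis has_integral_integrable_integral)
qed



lemma Ck1_D: "Ck 1 f \<Longrightarrow> (\<forall>x. f differentiable at x) \<and> (\<forall>v\<in>Basis. continuous_on UNIV (\<lambda>x. frechet_derivative f (at x) v))"
  unfolding One_nat_def Ck.simps by simp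

lemma Ck1_hd: assumes "Ck 1 f" shows "(f has_derivative frechet_derivative f (at x)) (at x)"
proof -
  have "f differentiable at x" using Ck1_D[OF assms] by blast
  then show ?thesis unfolding frechet_derivative_works .
qed

lemma Ck1_contf: assumes "Ck 1 f" shows "continuous_on UNIV f"
proof -
  have "\<forall>x. f differentiable at x" using Ck1_D[OF assms] by blast
  then have "\<forall>x. isCont f x" using differentiable_imp_continuous_within by blast
  then show ?thesis by (simp add: continuous_at_imp_continuous_on)
qed

lemma smooth_Ck1: "smooth f \<Longrightarrow> Ck 1 f" unfolding smooth_def by blast

lemma Ck1_cont:
  fixes f :: "'a::euclidean_space \<Rightarrow> 'b::real_normed_vector"
  assumes "Ck 1 f" "continuous_on UNIV a" "continuous_on UNIV v"
  shows "continuous_on UNIV (\<lambda>x. frechet_derivative f (at (a x)) (v x))"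
proof -
  have lin: "linear (frechet_derivative f (at z))" for z
    using Ck1_D[OF assms(1)] linear_frechet_derivative by blast
  have eq: "frechet_derivative f (at (a x)) (v x) =
     (\<Sum>b\<in>Basis. (v x \<bullet> b) *\<^sub>R frechet_derivative f (at (a x)) b)" for x
  proof -
    have "frechet_derivative f (at (a x)) (v x) = frechet_derivative f (at (a x)) (\<Sum>b\<in>Basis. (v x \<bullet> b) *\<^sub>R b)"
      by (simp add: euclidean_representation)
    also have "\<dots> = (\<Sum>b\<in>Basis. (v x \<bullet> b) *\<^sub>R frechet_derivative f (at (a x)) b)"
      using lin[of "a x"] by (simp add: linear_sum linear_cmul)
    finally show ?thesis .
  qed
  have cb: "continuous_on UNIV (\<lambda>x. frechet_derivative f (at (a x)) b)" if "b \<in> Basis" for b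
  proof -
    have "continuous_on UNIV (\<lambda>z. frechet_derivative f (at z) b)" using Ck1_D[OF assms(1)] that by blast
    from continuous_on_compose2[OF this assms(2)] show ?thesis by simp
  qed
  show ?thesis unfolding eq
    by (intro continuous_intros cb assms(3)) auto
qed

lemma pd_from: "(h has_derivative h') (at x) \<Longrightarrow> pd i h x = h' (axis i 1)"
  unfolding pd_def using frechet_derivative_at by metis

lemma pdx_from: "((\<lambda>x'. \<Theta> x' y) has_derivative h') (at x) \<Longrightarrow> pd_x i \<Theta> x y = h' (axis i 1)"
  unfolding pd_x_def using frechet_derivative_at by metis

lemma pdy_from: "((\<lambda>y'. \<Theta> x y') has_derivative h') (at y) \<Longrightarrow> pd_y i \<Theta> x y = h' (axis i 1)"
  unfolding pd_y_def using frechet_derivative_at by metis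

lemma comb:
  fixes a b D :: "real^'n \<Rightarrow> real"
  assumes "(D has_integral 0) UNIV" "\<And>x. a x = - b x + D x"
  shows "integral UNIV a = - integral UNIV b"
proof (cases "b integrable_on UNIV")
  case True
  have "((\<lambda>x. - b x + D x) has_integral (- integral UNIV b + 0)) UNIV"
    using True assms(1) by (intro has_integral_add has_integral_neg) auto
  then have "((\<lambda>x. - b x + D x) has_integral (- integral UNIV b)) UNIV" by simp
  moreover have "a = (\<lambda>x. - b x + D x)" using assms(2) by (simp add: fun_eq_iff)
  ultimately show ?thesis using integral_unique by metis
next
  case False
  have "\<not> a integrable_on UNIV"
  proof
    assume "a integrable_on UNIV"
    then have "(\<lambda>x. - (a x - D x)) integrable_on UNIV"
      using assms(1) by (intro integrable_neg integrable_diff) auto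
    moreover have "(\<lambda>x. - (a x - D x)) = b" using assms(2) by (auto simp: fun_eq_iff)
    ultimately show False using False by simp
  qed
  then show ?thesis using False by (simp add: not_integrable_integral)
qed

lemma inner_grad_lin:
  fixes L :: "real^'n \<Rightarrow> real"
  assumes "linear L"
  shows "w \<bullet> (\<chi> k. L (axis k 1)) = L w"
proof -
  have "L w = L (\<Sum>k\<in>UNIV. (w$k) *s axis k 1)" by (simp add: basis_expansion)
  also have "\<dots> = (\<Sum>k\<in>UNIV. w$k * L (axis k 1))"
    using assms by (simp add: linear_sum scalar_mult_eq_scaleR linear_cmul)
  finally show ?thesis by (simp add: inner_vec_def)
qed



lemma part1:
  fixes F :: "real^'n \<Rightarrow> real^'n" and g \<phi> :: "real^'n \<Rightarrow> real" and \<Phi> :: "real^'n \<Rightarrow> real^'n \<Rightarrow> real"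
  assumes CF: "Ck 1 F" and Cg: "Ck 1 g" and gpos: "\<forall>x. g x > 0"
    and CU: "Ck 1 (\<lambda>(x, y). \<Phi> x y)" and C\<phi>: "Ck 1 \<phi>" and K: "compact K" and zero: "\<forall>x. x \<notin> K \<longrightarrow> \<phi> x = 0"
  shows "T_mu g (\<lambda>x. \<phi> x * ((1 / g x) * pd i (\<lambda>x'. g x' * \<Phi> x' (F x')) x - pd_x i \<Phi> x (F x)))
       = dpi_dx F g i (\<lambda>x y. \<phi> x * \<Phi> x y)"
proof -
  define U where "U = (\<lambda>(x, y). \<Phi> x y)"
  have UC: "Ck 1 U" using CU by (simp add: U_def)
  have U\<Phi>: "\<Phi> x y = U (x, y)" for x y by (simp add: U_def)
  define e :: "real^'n" where "e = axis i 1"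
  define DU where "DU z = frechet_derivative U (at z)" for z
  define DF where "DF x = frechet_derivative F (at x)" for x
  define Dg where "Dg x = frechet_derivative g (at x)" for x
  define D\<phi> where "D\<phi> x = frechet_derivative \<phi> (at x)" for x
  have hU: "(U has_derivative DU z) (at z)" for z using Ck1_hd[OF UC] by (simp add: DU_def)
  have hF: "(F has_derivative DF x) (at x)" for x using Ck1_hd[OF CF] by (simp add: DF_def)
  have hg: "(g has_derivative Dg x) (at x)" for x using Ck1_hd[OF Cg] by (simp add: Dg_def)
  have h\<phi>: "(\<phi> has_derivative D\<phi> x) (at x)" for x using Ck1_hd[OF C\<phi>] by (simp add: D\<phi>_def)
  have hG: "((\<lambda>x. (x, F x)) has_derivative (\<lambda>v. (v, DF x v))) (at x)" for x
    by (intro has_derivative_Pair has_derivative_ident hF)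
  have hUG: "((\<lambda>x. \<Phi> x (F x)) has_derivative (\<lambda>v. DU (x, F x) (v, DF x v))) (at x)" for x
    using has_derivative_compose[OF hG hU] by (simp add: U\<Phi>)
  have hX: "((\<lambda>x'. (x', y)) has_derivative (\<lambda>v. (v, 0))) (at x)" for x y :: "real^'n"
    by (intro has_derivative_Pair has_derivative_ident has_derivative_const)
  have hUx: "((\<lambda>x'. \<Phi> x' y) has_derivative (\<lambda>v. DU (x, y) (v, 0))) (at x)" for x y
    using has_derivative_compose[OF hX hU] by (simp add: U\<Phi>)
  define P where "P x = g x * \<Phi> x (F x)" for x
  have hP: "(P has_derivative (\<lambda>v. g x * DU (x, F x) (v, DF x v) + Dg x v * \<Phi> x (F x))) (at x)" for x
    unfolding P_def[abs_def] by (rule has_derivative_mult[OF hg hUG])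
  have hh: "((\<lambda>x. \<phi> x * P x) has_derivative
     (\<lambda>v. \<phi> x * (g x * DU (x, F x) (v, DF x v) + Dg x v * \<Phi> x (F x)) + D\<phi> x v * P x)) (at x)" for x
    by (rule has_derivative_mult[OF h\<phi> hP])
  have pdh: "pd i (\<lambda>x. \<phi> x * P x) x =
     \<phi> x * (g x * DU (x, F x) (e, DF x e) + Dg x e * \<Phi> x (F x)) + D\<phi> x e * P x" for x
    using pd_from[OF hh] by (simp add: e_def)
  have pdP: "pd i (\<lambda>x'. g x' * \<Phi> x' (F x')) x = g x * DU (x, F x) (e, DF x e) + Dg x e * \<Phi> x (F x)" for x
    using pd_from[OF hP] by (simp add: e_def P_def[abs_def])
  have pdx1: "pd_x i \<Phi> x (F x) = DU (x, F x) (e, 0)" for x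
    using pdx_from[OF hUx] by (simp add: e_def)
  have hx2: "((\<lambda>x'. \<phi> x' * \<Phi> x' y) has_derivative (\<lambda>v. \<phi> x * DU (x, y) (v, 0) + D\<phi> x v * \<Phi> x y)) (at x)" for x y
    by (rule has_derivative_mult[OF h\<phi> hUx])
  have pdx2: "pd_x i (\<lambda>x y. \<phi> x * \<Phi> x y) x (F x) = \<phi> x * DU (x, F x) (e, 0) + D\<phi> x e * \<Phi> x (F x)" for x
    using pdx_from[OF hx2] by (simp add: e_def)
  have cF: "continuous_on UNIV F" by (rule Ck1_contf[OF CF])
  have cg: "continuous_on UNIV g" by (rule Ck1_contf[OF Cg])
  have c\<phi>: "continuous_on UNIV \<phi>" by (rule Ck1_contf[OF C\<phi>])
  have cG: "continuous_on UNIV (\<lambda>x. (x, F x))" by (intro continuous_intros cF)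
  have cUG: "continuous_on UNIV (\<lambda>x. \<Phi> x (F x))"
    using continuous_on_compose2[OF Ck1_contf[OF UC] cG] by (simp add: U\<Phi>)
  have cDF: "continuous_on UNIV (\<lambda>x. DF x e)"
    using Ck1_cont[OF CF continuous_on_id continuous_on_const] by (simp add: DF_def)
  have cDUG: "continuous_on UNIV (\<lambda>x. DU (x, F x) (e, DF x e))"
    using Ck1_cont[OF UC cG, of "\<lambda>x. (e, DF x e)"] cDF by (simp add: DU_def continuous_on_Pair)
  have cDg: "continuous_on UNIV (\<lambda>x. Dg x e)"
    using Ck1_cont[OF Cg continuous_on_id continuous_on_const] by (simp add: Dg_def)
  have cD\<phi>: "continuous_on UNIV (\<lambda>x. D\<phi> x e)"
    using Ck1_cont[OF C\<phi> continuous_on_id continuous_on_const] by (simp add: D\<phi>_def)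
  have cpdh: "continuous_on UNIV (pd i (\<lambda>x. \<phi> x * P x))"
  proof -
    have "pd i (\<lambda>x. \<phi> x * P x) = (\<lambda>x. \<phi> x * (g x * DU (x, F x) (e, DF x e) + Dg x e * \<Phi> x (F x)) + D\<phi> x e * (g x * \<Phi> x (F x)))"
      using pdh by (simp add: fun_eq_iff P_def)
    moreover have "continuous_on UNIV (\<lambda>x. \<phi> x * (g x * DU (x, F x) (e, DF x e) + Dg x e * \<Phi> x (F x)) + D\<phi> x e * (g x * \<Phi> x (F x)))"
      by (intro continuous_intros c\<phi> cg cUG cDUG cDg cD\<phi>)
    ultimately show ?thesis by simp
  qed
  have diffh: "\<forall>x. (\<lambda>x. \<phi> x * P x) differentiable at x"
    using hh differentiable_def by blast
  have ib: "(pd i (\<lambda>x. \<phi> x * P x) has_integral 0) UNIV"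
    by (rule ibp_zero[OF diffh cpdh K]) (simp add: zero)
  show ?thesis
    unfolding T_mu_def dpi_dx_def pi_meas_def
  proof (rule comb[OF ib])
    fix x
    have gx: "g x \<noteq> 0" using gpos by (metis less_irrefl)
    show "\<phi> x * (1 / g x * pd i (\<lambda>x'. g x' * \<Phi> x' (F x')) x - pd_x i \<Phi> x (F x)) * g x =
      - (pd_x i (\<lambda>x y. \<phi> x * \<Phi> x y) x (F x) * g x) + pd i (\<lambda>x. \<phi> x * P x) x"
      unfolding pdh pdP pdx1 pdx2 unfolding P_def using gx by (simp add: field_simps)
  qed
qed



lemma part2:
  fixes F :: "real^'n \<Rightarrow> real^'n" and g \<phi> :: "real^'n \<Rightarrow> real" and \<Phi> :: "real^'n \<Rightarrow> real^'n \<Rightarrow> real"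
  assumes CU: "Ck 1 (\<lambda>(x, y). \<Phi> x y)"
  shows "T_mu g (\<lambda>x. \<phi> x * (- pd_y j \<Phi> x (F x))) = dpi_dy F g j (\<lambda>x y. \<phi> x * \<Phi> x y)"
proof -
  define U where "U = (\<lambda>(x, y). \<Phi> x y)"
  have UC: "Ck 1 U" using CU by (simp add: U_def)
  have U\<Phi>: "\<Phi> x y = U (x, y)" for x y by (simp add: U_def)
  define DU where "DU z = frechet_derivative U (at z)" for z
  have hU: "(U has_derivative DU z) (at z)" for z using Ck1_hd[OF UC] by (simp add: DU_def)
  have hY: "((\<lambda>y'. (x, y')) has_derivative (\<lambda>w. (0, w))) (at y)" for x y :: "real^'n"
    by (intro has_derivative_Pair has_derivative_ident has_derivative_const)
  have hUy: "((\<lambda>y'. \<Phi> x y') has_derivative (\<lambda>w. DU (x, y) (0, w))) (at y)" for x y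
    using has_derivative_compose[OF hY hU] by (simp add: U\<Phi>)
  have h2: "((\<lambda>y'. \<phi> x * \<Phi> x y') has_derivative (\<lambda>w. \<phi> x * DU (x, y) (0, w))) (at y)" for x y
    by (rule has_derivative_mult_right[OF hUy])
  have p1: "pd_y j \<Phi> x y = DU (x, y) (0, axis j 1)" for x y using pdy_from[OF hUy] .
  have p2: "pd_y j (\<lambda>x y. \<phi> x * \<Phi> x y) x y = \<phi> x * DU (x, y) (0, axis j 1)" for x y
    using pdy_from[where \<Theta>="\<lambda>x y. \<phi> x * \<Phi> x y", OF h2] by simp
  have "(\<lambda>x. \<phi> x * (- pd_y j \<Phi> x (F x)) * g x) = (\<lambda>x. - (pd_y j (\<lambda>x y. \<phi> x * \<Phi> x y) x (F x) * g x))"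
    unfolding p1 p2 by (simp add: fun_eq_iff)
  then show ?thesis unfolding T_mu_def dpi_dy_def pi_meas_def by simp
qed

lemma part4:
  fixes F :: "real^'n \<Rightarrow> real^'n" and g \<phi> f :: "real^'n \<Rightarrow> real"
  assumes Cf: "Ck 1 f"
  shows "T_mu g (\<lambda>x. \<phi> x * (- pd j f (F x))) = dpi_dy F g j (\<lambda>x y. \<phi> x * (f y - f x))"
proof -
  define Df where "Df x = frechet_derivative f (at x)" for x
  have hf: "(f has_derivative Df x) (at x)" for x using Ck1_hd[OF Cf] by (simp add: Df_def)
  have h2: "((\<lambda>y'. \<phi> x * (f y' - f x)) has_derivative (\<lambda>w. \<phi> x * (Df y w - 0))) (at y)" for x y
    by (intro has_derivative_mult_right has_derivative_diff hf has_derivative_const)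
  have p1: "pd j f y = Df y (axis j 1)" for y using pd_from[OF hf] .
  have p2: "pd_y j (\<lambda>x y. \<phi> x * (f y - f x)) x y = \<phi> x * Df y (axis j 1)" for x y
    using pdy_from[where \<Theta>="\<lambda>x y. \<phi> x * (f y - f x)", OF h2] by simp
  have "(\<lambda>x. \<phi> x * (- pd j f (F x)) * g x) = (\<lambda>x. - (pd_y j (\<lambda>x y. \<phi> x * (f y - f x)) x (F x) * g x))"
    unfolding p1 p2 by (simp add: fun_eq_iff)
  then show ?thesis unfolding T_mu_def dpi_dy_def pi_meas_def by simp
qed



lemma part3:
  fixes F :: "real^'n \<Rightarrow> real^'n" and g \<phi> f :: "real^'n \<Rightarrow> real"
  assumes CF: "Ck 1 F" and Cg: "Ck 1 g" and gpos: "\<forall>x. g x > 0" and Cf: "Ck 1 f"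
    and C\<phi>: "Ck 1 \<phi>" and K: "compact K" and zero: "\<forall>x. x \<notin> K \<longrightarrow> \<phi> x = 0"
  shows "T_mu g (\<lambda>x. \<phi> x * (pd i F x \<bullet> grad f (F x) + (f (F x) - f x) * pd i (\<lambda>x'. ln (g x')) x))
       = dpi_dx F g i (\<lambda>x y. \<phi> x * (f y - f x))"
proof -
  define e :: "real^'n" where "e = axis i 1"
  define Df where "Df x = frechet_derivative f (at x)" for x
  define DF where "DF x = frechet_derivative F (at x)" for x
  define Dg where "Dg x = frechet_derivative g (at x)" for x
  define D\<phi> where "D\<phi> x = frechet_derivative \<phi> (at x)" for x
  have hf: "(f has_derivative Df x) (at x)" for x using Ck1_hd[OF Cf] by (simp add: Df_def)
  have hF: "(F has_derivative DF x) (at x)" for x using Ck1_hd[OF CF] by (simp add: DF_def)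
  have hg: "(g has_derivative Dg x) (at x)" for x using Ck1_hd[OF Cg] by (simp add: Dg_def)
  have h\<phi>: "(\<phi> has_derivative D\<phi> x) (at x)" for x using Ck1_hd[OF C\<phi>] by (simp add: D\<phi>_def)
  have linDf: "linear (Df x)" for x
    using Ck1_D[OF Cf] linear_frechet_derivative unfolding Df_def by blast
  have hfF: "((\<lambda>x. f (F x)) has_derivative (\<lambda>v. Df (F x) (DF x v))) (at x)" for x
    using has_derivative_compose[OF hF hf] by simp
  define Q where "Q x = g x * (f (F x) - f x)" for x
  have hQ: "(Q has_derivative (\<lambda>v. g x * (Df (F x) (DF x v) - Df x v) + Dg x v * (f (F x) - f x))) (at x)" for x
    unfolding Q_def[abs_def] by (rule has_derivative_mult[OF hg has_derivative_diff[OF hfF hf]])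
  have hh: "((\<lambda>x. \<phi> x * Q x) has_derivative
     (\<lambda>v. \<phi> x * (g x * (Df (F x) (DF x v) - Df x v) + Dg x v * (f (F x) - f x)) + D\<phi> x v * Q x)) (at x)" for x
    by (rule has_derivative_mult[OF h\<phi> hQ])
  have pdh: "pd i (\<lambda>x. \<phi> x * Q x) x =
     \<phi> x * (g x * (Df (F x) (DF x e) - Df x e) + Dg x e * (f (F x) - f x)) + D\<phi> x e * Q x" for x
    using pd_from[OF hh] by (simp add: e_def)
  have hx2: "((\<lambda>x'. \<phi> x' * (f y - f x')) has_derivative (\<lambda>v. \<phi> x * (0 - Df x v) + D\<phi> x v * (f y - f x))) (at x)" for x y
    by (rule has_derivative_mult[OF h\<phi> has_derivative_diff[OF has_derivative_const hf]])
  have pdx2: "pd_x i (\<lambda>x y. \<phi> x * (f y - f x)) x y = \<phi> x * (0 - Df x e) + D\<phi> x e * (f y - f x)" for x y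
    using pdx_from[where \<Theta>="\<lambda>x y. \<phi> x * (f y - f x)", OF hx2] by (simp add: e_def)
  have hln: "((\<lambda>x. ln (g x)) has_derivative (\<lambda>v. inverse (g x) * Dg x v)) (at x)" for x
  proof -
    have "(ln has_derivative (*) (inverse (g x))) (at (g x))"
      using DERIV_ln[of "g x"] gpos unfolding has_field_derivative_def by simp
    from has_derivative_compose[OF hg this] show ?thesis by simp
  qed
  have pdln: "pd i (\<lambda>x'. ln (g x')) x = inverse (g x) * Dg x e" for x
    using pd_from[OF hln] by (simp add: e_def)
  have pdF: "pd i F x = DF x e" for x using pd_from[OF hF] by (simp add: e_def)
  have gradf: "grad f y = (\<chi> k. Df y (axis k 1))" for y
    unfolding grad_def using pd_from[OF hf] by simp
  have inn: "pd i F x \<bullet> grad f (F x) = Df (F x) (DF x e)" for x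
    unfolding pdF gradf by (rule inner_grad_lin[OF linDf])
  have cF: "continuous_on UNIV F" by (rule Ck1_contf[OF CF])
  have cg: "continuous_on UNIV g" by (rule Ck1_contf[OF Cg])
  have cf: "continuous_on UNIV f" by (rule Ck1_contf[OF Cf])
  have c\<phi>: "continuous_on UNIV \<phi>" by (rule Ck1_contf[OF C\<phi>])
  have cfF: "continuous_on UNIV (\<lambda>x. f (F x))"
    using continuous_on_compose2[OF cf cF] by simp
  have cDF: "continuous_on UNIV (\<lambda>x. DF x e)"
    using Ck1_cont[OF CF continuous_on_id continuous_on_const] by (simp add: DF_def)
  have cDfF: "continuous_on UNIV (\<lambda>x. Df (F x) (DF x e))"
    using Ck1_cont[OF Cf cF cDF] by (simp add: Df_def)
  have cDf: "continuous_on UNIV (\<lambda>x. Df x e)"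
    using Ck1_cont[OF Cf continuous_on_id continuous_on_const] by (simp add: Df_def)
  have cDg: "continuous_on UNIV (\<lambda>x. Dg x e)"
    using Ck1_cont[OF Cg continuous_on_id continuous_on_const] by (simp add: Dg_def)
  have cD\<phi>: "continuous_on UNIV (\<lambda>x. D\<phi> x e)"
    using Ck1_cont[OF C\<phi> continuous_on_id continuous_on_const] by (simp add: D\<phi>_def)
  have cpdh: "continuous_on UNIV (pd i (\<lambda>x. \<phi> x * Q x))"
  proof -
    have "pd i (\<lambda>x. \<phi> x * Q x) = (\<lambda>x. \<phi> x * (g x * (Df (F x) (DF x e) - Df x e) + Dg x e * (f (F x) - f x)) + D\<phi> x e * (g x * (f (F x) - f x)))"
      using pdh by (simp add: fun_eq_iff Q_def)
    moreover have "continuous_on UNIV (\<lambda>x. \<phi> x * (g x * (Df (F x) (DF x e) - Df x e) + Dg x e * (f (F x) - f x)) + D\<phi> x e * (g x * (f (F x) - f x)))"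
      by (intro continuous_intros c\<phi> cg cf cfF cDfF cDf cDg cD\<phi>)
    ultimately show ?thesis by simp
  qed
  have diffh: "\<forall>x. (\<lambda>x. \<phi> x * Q x) differentiable at x"
    using hh differentiable_def by blast
  have ib: "(pd i (\<lambda>x. \<phi> x * Q x) has_integral 0) UNIV"
    by (rule ibp_zero[OF diffh cpdh K]) (simp add: zero)
  show ?thesis
    unfolding T_mu_def dpi_dx_def pi_meas_def
  proof (rule comb[OF ib])
    fix x
    have gx: "g x \<noteq> 0" using gpos by (metis less_irrefl)
    show "\<phi> x * (pd i F x \<bullet> grad f (F x) + (f (F x) - f x) * pd i (\<lambda>x'. ln (g x')) x) * g x =
      - (pd_x i (\<lambda>x y. \<phi> x * (f y - f x)) x (F x) * g x) + pd i (\<lambda>x. \<phi> x * Q x) x"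
      unfolding pdh inn pdln pdx2 unfolding Q_def using gx by (simp add: field_simps)
  qed
qed


lemma test_fun_D:
  assumes "test_fun \<phi>"
  shows "Ck 1 \<phi>" "compact (closure {x. \<phi> x \<noteq> 0})" "\<forall>x. x \<notin> closure {x. \<phi> x \<noteq> 0} \<longrightarrow> \<phi> x = 0"
proof -
  have sm: "smooth \<phi>" and cp: "compact (closure {x. \<phi> x \<noteq> 0})"
    using assms unfolding test_fun_def by simp_all
  show "Ck 1 \<phi>" by (rule smooth_Ck1[OF sm])
  show "compact (closure {x. \<phi> x \<noteq> 0})" by (rule cp)
  show "\<forall>x. x \<notin> closure {x. \<phi> x \<noteq> 0} \<longrightarrow> \<phi> x = 0"
  proof (intro allI impI)
    fix x assume "x \<notin> closure {x. \<phi> x \<noteq> 0}"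
    then have "x \<notin> {x. \<phi> x \<noteq> 0}" using closure_subset by (metis subsetD)
    then show "\<phi> x = 0" by simp
  qed
qed

theorem proposition5p1:
  fixes F :: "real^'n \<Rightarrow> real^'n" and g f :: "real^'n \<Rightarrow> real"
  assumes F_C1: "Ck 1 F"
    and g_smooth: "smooth g" and g_pos: "\<forall>x. g x > 0"
    and f_smooth: "smooth f"
  shows
    "(\<forall>(i::'n) \<Phi>. test_fun (\<lambda>(x, y). \<Phi> x y) \<longrightarrow>
        kirchhoff_div (T_mu g) (dpi_dx F g i) \<Phi>
          (\<lambda>x. (1 / g x) * pd i (\<lambda>x'. g x' * \<Phi> x' (F x')) x - pd_x i \<Phi> x (F x)))
   \<and> (\<forall>(j::'n) \<Phi>. test_fun (\<lambda>(x, y). \<Phi> x y) \<longrightarrow>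
        kirchhoff_div (T_mu g) (dpi_dy F g j) \<Phi> (\<lambda>x. - pd_y j \<Phi> x (F x)))
   \<and> (\<forall>i::'n.
        kirchhoff_div (T_mu g) (dpi_dx F g i) (\<lambda>x y. f y - f x)
          (\<lambda>x. pd i F x \<bullet> grad f (F x) + (f (F x) - f x) * pd i (\<lambda>x'. ln (g x')) x))
   \<and> (\<forall>j::'n.
        kirchhoff_div (T_mu g) (dpi_dy F g j) (\<lambda>x y. f y - f x) (\<lambda>x. - pd j f (F x)))"
proof (intro conjI allI impI)
  have Cg: "Ck 1 g" by (rule smooth_Ck1[OF g_smooth])
  have Cf: "Ck 1 f" by (rule smooth_Ck1[OF f_smooth])
  fix i :: 'n and \<Phi> :: "real^'n \<Rightarrow> real^'n \<Rightarrow> real"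
  assume "test_fun (\<lambda>(x, y). \<Phi> x y)"
  then have "smooth (\<lambda>(x, y). \<Phi> x y)" unfolding test_fun_def by simp
  then have CU: "Ck 1 (\<lambda>(x, y). \<Phi> x y)" by (rule smooth_Ck1)
  show "kirchhoff_div (T_mu g) (dpi_dx F g i) \<Phi>
          (\<lambda>x. (1 / g x) * pd i (\<lambda>x'. g x' * \<Phi> x' (F x')) x - pd_x i \<Phi> x (F x))"
    unfolding kirchhoff_div_def
  proof (intro allI impI)
    fix \<phi> :: "real^'n \<Rightarrow> real" assume "test_fun \<phi>"
    note tf = test_fun_D[OF this]
    show "T_mu g (\<lambda>x. \<phi> x * ((1 / g x) * pd i (\<lambda>x'. g x' * \<Phi> x' (F x')) x - pd_x i \<Phi> x (F x))) =
      dpi_dx F g i (\<lambda>x y. \<phi> x * \<Phi> x y)"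
      by (rule part1[OF F_C1 Cg g_pos CU tf])
  qed
next
  fix j :: 'n and \<Phi> :: "real^'n \<Rightarrow> real^'n \<Rightarrow> real"
  assume "test_fun (\<lambda>(x, y). \<Phi> x y)"
  then have "smooth (\<lambda>(x, y). \<Phi> x y)" unfolding test_fun_def by simp
  then have CU: "Ck 1 (\<lambda>(x, y). \<Phi> x y)" by (rule smooth_Ck1)
  show "kirchhoff_div (T_mu g) (dpi_dy F g j) \<Phi> (\<lambda>x. - pd_y j \<Phi> x (F x))"
    unfolding kirchhoff_div_def using part2[OF CU] by blast
next
  fix i :: 'n
  have Cg: "Ck 1 g" by (rule smooth_Ck1[OF g_smooth])
  have Cf: "Ck 1 f" by (rule smooth_Ck1[OF f_smooth])
  show "kirchhoff_div (T_mu g) (dpi_dx F g i) (\<lambda>x y. f y - f x)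
          (\<lambda>x. pd i F x \<bullet> grad f (F x) + (f (F x) - f x) * pd i (\<lambda>x'. ln (g x')) x)"
    unfolding kirchhoff_div_def
  proof (intro allI impI)
    fix \<phi> :: "real^'n \<Rightarrow> real" assume "test_fun \<phi>"
    note tf = test_fun_D[OF this]
    show "T_mu g (\<lambda>x. \<phi> x * (pd i F x \<bullet> grad f (F x) + (f (F x) - f x) * pd i (\<lambda>x'. ln (g x')) x)) =
      dpi_dx F g i (\<lambda>x y. \<phi> x * (f y - f x))"
      by (rule part3[OF F_C1 Cg g_pos Cf tf])
  qed
next
  fix j :: 'n
  have Cf: "Ck 1 f" by (rule smooth_Ck1[OF f_smooth])
  show "kirchhoff_div (T_mu g) (dpi_dy F g j) (\<lambda>x y. f y - f x) (\<lambda>x. - pd j f (F x))"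
    unfolding kirchhoff_div_def using part4[OF Cf] by blast
qed

end
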